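(* For all integers $m$ and $n$, the coefficients $N_{\overline{S}}(m,n)$, $N_{\overline{S}_1}(m,n)$ and $N_{\overline{S}_2}(m,n)$ are nonnegative.
   Context: $(a;q)_\infty=\prod_{k\ge0}(1-aq^k)$. Define \begin{align*} \overline{S}(z,q)&=\sum_{n=1}^\infty\frac{q^n(-q^{n+1};q)_\infty(q^{n+1};q)_\infty}{(zq^n;q)_\infty(z^{-1}q^n;q)_\infty}=\sum_{n\ge1}\sum_mN_{\overline{S}}(m,n)z^mq^n,\\ \overline{S}_1(z,q)&=\sum_{n=0}^\infty\frac{q^{2n+1}(-q^{2n+2};q)_\infty(q^{2n+2};q)_\infty}{(zq^{2n+1};q)_\infty(z^{-1}q^{2n+1};q)_\infty}=\sum_{n\ge1}\sum_mN_{\overline{S}_1}(m,n)z^mq^n,\\ \overline{S}_2(z,q)&=\sum_{n=1}^\infty\frac{q^{2n}(-q^{2n+1};q)_\infty(q^{2n+1};q)_\infty}{(zq^{2n};q)_\infty(z^{-1}q^{2n};q)_\infty}=\sum_{n\ge1}\sum_mN_{\overline{S}_2}(m,n)z^mq^n, \end{align*} the expansions being as formal power series in $q$ with Laurent polynomial coefficients in $z$. *)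

theory Defs
  imports "HOL-Computational_Algebra.Formal_Power_Series"
          "HOL-Computational_Algebra.Formal_Laurent_Series"
begin

(* Formal power series in q (= fps_X) whose coefficients are formal Laurent
   series in z (= fls_X) over the reals.  Laurent polynomials in z form a
   subring of real fls. *)

type_synonym qz = "real fls fps"

definition zvar :: "real fls" where "zvar = fls_X"

(* (a q^k; q)_infinity = prod_{j>=0} (1 - a q^(k+j)), as a q-adic limit *)
definition qpoch_inf :: "real fls \<Rightarrow> nat \<Rightarrow> qz" where
  "qpoch_inf a k = lim (\<lambda>N. \<Prod>j<N. (1 - fps_const a * fps_X ^ (k + j)))"

(* generic summand: q^k (-q^(k+1);q)_inf (q^(k+1);q)_inf / ((z q^k;q)_inf (z^-1 q^k;q)_inf) *)
definition Sterm :: "nat \<Rightarrow> qz" where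
  "Sterm k = fps_X ^ k * qpoch_inf (-1) (k + 1) * qpoch_inf 1 (k + 1)
       * inverse (qpoch_inf zvar k) * inverse (qpoch_inf (inverse zvar) k)"

definition Sbar :: qz where
  "Sbar = lim (\<lambda>N. \<Sum>n\<in>{1..N}. Sterm n)"

definition Sbar1 :: qz where
  "Sbar1 = lim (\<lambda>N. \<Sum>n<N. Sterm (2 * n + 1))"

definition Sbar2 :: qz where
  "Sbar2 = lim (\<lambda>N. \<Sum>n\<in>{1..N}. Sterm (2 * n))"

definition coeff_zq :: "qz \<Rightarrow> int \<Rightarrow> nat \<Rightarrow> real" where
  "coeff_zq F m n = fls_nth (fps_nth F n) m"

definition N_Sbar :: "int \<Rightarrow> nat \<Rightarrow> real" where "N_Sbar m n = coeff_zq Sbar m n"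
definition N_Sbar1 :: "int \<Rightarrow> nat \<Rightarrow> real" where "N_Sbar1 m n = coeff_zq Sbar1 m n"
definition N_Sbar2 :: "int \<Rightarrow> nat \<Rightarrow> real" where "N_Sbar2 m n = coeff_zq Sbar2 m n"

end

theory Submission
  imports Defs
begin

unbundle fps_syntax

definition nnl :: "real fls \<Rightarrow> bool" where "nnl a \<longleftrightarrow> (\<forall>m. 0 \<le> a $$ m)"
definition nn :: "qz \<Rightarrow> bool" where "nn F \<longleftrightarrow> (\<forall>n. nnl (F $ n))"
definition qc :: "nat \<Rightarrow> qz \<Rightarrow> qz \<Rightarrow> bool" where "qc n F G \<longleftrightarrow> (\<forall>i\<le>n. F $ i = G $ i)"

lemma nnl_0[simp]: "nnl 0" by (simp add: nnl_def)
lemma nnl_1[simp]: "nnl 1" by (simp add: nnl_def)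
lemma nnl_add: "nnl a \<Longrightarrow> nnl b \<Longrightarrow> nnl (a+b)" by (simp add: nnl_def)
lemma nnl_mult: "nnl a \<Longrightarrow> nnl b \<Longrightarrow> nnl (a*b)"
  unfolding nnl_def by (auto simp: fls_times_nth(2) intro!: sum_nonneg mult_nonneg_nonneg)
lemma nnl_sum: "(\<And>i. i\<in>A \<Longrightarrow> nnl (f i)) \<Longrightarrow> nnl (sum f A)"
  by (induction A rule: infinite_finite_induct) (auto intro: nnl_add)
lemma nnl_X: "nnl fls_X" by (simp add: nnl_def)
lemma nnl_Xinv: "nnl (inverse fls_X)" by (simp add: nnl_def fls_inverse_X)

lemma nn_add: "nn F \<Longrightarrow> nn G \<Longrightarrow> nn (F+G)" by (simp add: nn_def nnl_add)
lemma nn_mult: "nn F \<Longrightarrow> nn G \<Longrightarrow> nn (F*G)"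
  unfolding nn_def by (auto simp: fps_mult_nth intro!: nnl_sum nnl_mult)
lemma nn_1[simp]: "nn 1" by (simp add: nn_def)
lemma nn_0[simp]: "nn 0" by (simp add: nn_def)
lemma nn_Xp: "nn (fps_X ^ k)" by (simp add: nn_def)
lemma nn_const: "nnl c \<Longrightarrow> nn (fps_const c)" by (simp add: nn_def)
lemma nn_prod: "(\<And>j. j<(N::nat) \<Longrightarrow> nn (f j)) \<Longrightarrow> nn (\<Prod>j<N. f j)"
  by (induction N) (auto intro: nn_mult)
lemma nn_sum: "(\<And>i. i\<in>A \<Longrightarrow> nn (f i)) \<Longrightarrow> nn (sum f A)"
  by (induction A rule: infinite_finite_induct) (auto intro: nn_add)

lemma nn_inv:
  assumes G: "nn G" and G0: "G $ 0 = 0"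
  shows "nn (inverse (1 - G))"
proof -
  define F where "F = 1 - G"
  have F0: "F $ 0 = 1" by (simp add: F_def G0)
  have inv1: "inverse F * F = 1" by (rule inverse_mult_eq_1) (simp add: F0)
  have "nnl (inverse F $ n)" for n
  proof (induction n rule: less_induct)
    case (less n)
    show ?case
    proof (cases "n = 0")
      case True thus ?thesis by (simp add: F0)
    next
      case False
      have "0 = (inverse F * F) $ n" using False by (simp add: inv1)
      also have "\<dots> = (\<Sum>i=0..n. inverse F $ i * F $ (n - i))" by (rule fps_mult_nth)
      also have "\<dots> = (\<Sum>i\<in>insert n {0..<n}. inverse F $ i * F $ (n - i))"
        by (rule sum.cong) auto
      also have "\<dots> = inverse F $ n - (\<Sum>i\<in>{0..<n}. inverse F $ i * G $ (n - i))"
        by (simp add: F0 F_def G0 sum_negf)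
      finally have "inverse F $ n = (\<Sum>i\<in>{0..<n}. inverse F $ i * G $ (n - i))" by simp
      moreover have "nnl (\<Sum>i\<in>{0..<n}. inverse F $ i * G $ (n - i))"
        using less G by (auto simp: nn_def intro!: nnl_sum nnl_mult)
      ultimately show ?thesis by simp
    qed
  qed
  thus ?thesis by (simp add: nn_def F_def)
qed


lemma qc_refl[simp]: "qc n F F" by (simp add: qc_def)
lemma qc_trans: "qc n F G \<Longrightarrow> qc n G H \<Longrightarrow> qc n F H" by (simp add: qc_def)
lemma qc_add: "qc n F G \<Longrightarrow> qc n H K \<Longrightarrow> qc n (F+H) (G+K)" by (simp add: qc_def)
lemma qc_mult: "qc n F G \<Longrightarrow> qc n H K \<Longrightarrow> qc n (F*H) (G*K)"
  unfolding qc_def by (auto simp: fps_mult_nth intro!: sum.cong)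
lemma qc_nn: "qc n F G \<Longrightarrow> nnl (G$n) \<Longrightarrow> nnl (F$n)" by (simp add: qc_def)

lemma qc_inv:
  fixes F G :: qz
  assumes qc: "qc n F G" and G0: "G $ 0 \<noteq> 0"
  shows "qc n (inverse F) (inverse G)"
proof -
  have F0: "F $ 0 \<noteq> 0" using qc G0 by (simp add: qc_def)
  have e1: "inverse F * F = 1" using F0 by (rule inverse_mult_eq_1)
  have e2: "G * inverse G = 1" using G0 by (rule inverse_mult_eq_1')
  have "inverse F * (G - F) * inverse G = inverse F * (G * inverse G) - (inverse F * F) * inverse G"
    by (simp add: algebra_simps)
  hence eq: "inverse F - inverse G = inverse F * (G - F) * inverse G" by (simp add: e1 e2)
  have "qc n (G - F) 0" using qc by (simp add: qc_def)
  hence "qc n (inverse F * (G - F) * inverse G) (inverse F * 0 * inverse G)"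
    by (intro qc_mult) auto
  hence "qc n (inverse F - inverse G) 0" by (simp add: eq)
  thus ?thesis by (simp add: qc_def)
qed

lemma qc_prod:
  fixes a :: "nat \<Rightarrow> qz"
  assumes "\<And>j. j \<ge> M \<Longrightarrow> qc n (a j) 1" "M \<le> N"
  shows "qc n (\<Prod>j<N. a j) (\<Prod>j<M. a j)"
  using assms(2)
proof (induction N rule: dec_induct)
  case base thus ?case by simp
next
  case (step N)
  have "qc n ((\<Prod>j<N. a j) * a N) ((\<Prod>j<M. a j) * 1)"
    by (rule qc_mult[OF step(3) assms(1)]) (use step in simp)
  thus ?case by simp
qed

lemma qc_lim:
  fixes f :: "nat \<Rightarrow> qz"
  assumes "\<And>n N. n < N \<Longrightarrow> qc n (f N) (f (Suc n))" and "n < N"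
  shows "qc n (lim f) (f N)"
proof -
  define L where "L = Abs_fps (\<lambda>i. f (Suc i) $ i)"
  have "f \<longlonglongrightarrow> L"
  proof (rule tendsto_fpsI)
    fix i
    have "f N $ i = L $ i" if "N \<ge> Suc i" for N
    proof -
      have "qc i (f N) (f (Suc i))" using assms(1)[of i N] that by simp
      hence "f N $ i = f (Suc i) $ i" unfolding qc_def by blast
      thus ?thesis by (simp add: L_def)
    qed
    thus "eventually (\<lambda>N. f N $ i = L $ i) sequentially" by (rule eventually_sequentiallyI)
  qed
  hence "lim f = L" by (rule limI)
  moreover have "qc n L (f N)" unfolding qc_def
  proof (intro allI impI)
    fix i assume "i \<le> n"
    hence "i < N" using assms(2) by simp
    hence "qc i (f N) (f (Suc i))" using assms(1) by blast
    hence "f N $ i = f (Suc i) $ i" unfolding qc_def by blast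
    thus "L $ i = f N $ i" by (simp add: L_def)
  qed
  ultimately show ?thesis by simp
qed

definition pp :: "real fls \<Rightarrow> nat \<Rightarrow> nat \<Rightarrow> qz" where
  "pp a k N = (\<Prod>j<N. (1 - fps_const a * fps_X ^ (k + j)))"
definition ginv :: "real fls \<Rightarrow> nat \<Rightarrow> qz" where
  "ginv c m = inverse (1 - fps_const c * fps_X ^ m)"

lemma qpoch_qc:
  assumes "n < N" shows "qc n (qpoch_inf a k) (pp a k N)"
proof -
  have "qpoch_inf a k = lim (pp a k)" by (simp add: qpoch_inf_def pp_def[abs_def])
  moreover have "qc n (lim (pp a k)) (pp a k N)"
  proof (rule qc_lim[OF _ assms])
    fix n N :: nat assume "n < N"
    show "qc n (pp a k N) (pp a k (Suc n))" unfolding pp_def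
      by (rule qc_prod) (use \<open>n < N\<close> in \<open>auto simp: qc_def\<close>)
  qed
  ultimately show ?thesis by simp
qed

lemma prod_nth0: "(\<Prod>j<(N::nat). (f j :: qz)) $ 0 = (\<Prod>j<N. f j $ 0)"
  by (induction N) auto

lemma pp0: "k \<ge> 1 \<Longrightarrow> pp a k N $ 0 = 1"
  unfolding pp_def prod_nth0 by (rule prod.neutral) auto

lemma inverse_prod: "inverse (\<Prod>j<(N::nat). (f j :: qz)) = (\<Prod>j<N. inverse (f j))"
  by (induction N) (auto simp: fps_inverse_mult)

lemma nn_ginv: "nnl c \<Longrightarrow> m \<ge> 1 \<Longrightarrow> nn (ginv c m)"
  unfolding ginv_def by (rule nn_inv) (auto intro!: nn_mult nn_const nn_Xp)

lemma m1: "fps_const (-1::real fls) = (-1::qz)" by (metis fps_const_1_eq_1 fps_const_neg)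

lemma f: "(1 - fps_const (-1) * y) * (1 - fps_const 1 * y) = 1 - y * (y::qz)"
      by (simp add: m1 algebra_simps)

lemma ab:
  fixes c c' :: "real fls" and a b :: qz
  assumes cc: "c * c' = 1"
  and a_def: "a = 1 - fps_const c * fps_X^m" and b_def: "b = 1 - fps_const c' * fps_X^m"
  shows "b + a - a*b = 1 - fps_X^(2*m)"
proof -
  have cc': "fps_const c * fps_const c' = (1::qz)" by (simp add: cc)
  have "a * b = 1 - fps_const c * fps_X^m - fps_const c' * fps_X^m
       + (fps_const c * fps_const c') * (fps_X^m * fps_X^m)"
      unfolding a_def b_def by (simp only: algebra_simps mult_1 mult_1_right)
  also have "\<dots> = 1 - fps_const c * fps_X^m - fps_const c' * fps_X^m + fps_X^(2*m)"
      by (simp only: cc' mult_1 mult_2 power_add)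
  finally have ab': "a * b = \<dots>" .
  show ?thesis unfolding ab' unfolding a_def b_def by (simp only: algebra_simps) 
qed

lemma B_eq:
  fixes c c' :: "real fls"
  assumes cc: "c * c' = 1" and m: "m \<ge> 1"
  shows "(1 - fps_X^(2*m)) * ginv c m * ginv c' m = ginv c m + ginv c' m - 1"
proof -
  define a where "a = 1 - fps_const c * fps_X^m"
  define b where "b = 1 - fps_const c' * fps_X^m"
  have a0: "a $ 0 = 1" and b0: "b $ 0 = 1" using m by (auto simp: a_def b_def)
  have ia: "inverse a * a = 1" by (rule inverse_mult_eq_1) (simp add: a0)
  have ib: "inverse b * b = 1" by (rule inverse_mult_eq_1) (simp add: b0)
  have cc': "fps_const c * fps_const c' = (1::qz)" by (simp add: fps_const_mult cc)
  have ab: "b + a - a*b = 1 - fps_X^(2*m)" by (rule ab[OF cc a_def b_def])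
  have "(1 - fps_X^(2*m)) * ginv c m * ginv c' m = (b + a - a*b) * inverse a * inverse b"
    by (simp only: ab[symmetric] ginv_def a_def[symmetric] b_def[symmetric])
  also have "\<dots> = inverse a * (inverse b * b) + inverse b * (inverse a * a) - (inverse a * a) * (inverse b * b)"
    by (simp add: algebra_simps)
  also have "\<dots> = ginv c m + ginv c' m - 1" by (simp only: ia ib mult_1_right mult_1 ginv_def a_def[symmetric] b_def[symmetric])
  finally show ?thesis .
qed

lemma nn_B:
  fixes c c' :: "real fls"
  assumes "c * c' = 1" "m \<ge> 1" "nnl c" "nnl c'"
  shows "nn ((1 - fps_X^(2*m)) * ginv c m * ginv c' m)"
proof -
  have n1: "nn (ginv c m)" "nn (ginv c' m)" using assms by (auto intro: nn_ginv)
  have g0: "ginv c m $ 0 = 1" "ginv c' m $ 0 = 1" using assms(2) by (auto simp: ginv_def)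
  have "nnl ((ginv c m + ginv c' m - 1) $ n)" for n
  proof (cases "n = 0")
    case True thus ?thesis using g0 by simp
  next
    case False thus ?thesis using n1 by (simp add: nn_def nnl_add)
  qed
  thus ?thesis unfolding B_eq[OF assms(1,2)] nn_def by blast
qed

lemma approx_eq:
  "fps_X^k * pp (-1) (k+1) N * pp 1 (k+1) N * inverse (pp c k (Suc N)) * inverse (pp c' k (Suc N))
   = fps_X^k * ginv c k * ginv c' k *
     (\<Prod>j<N. (1 - fps_X^(2*(k+1+j))) * ginv c (k+1+j) * ginv c' (k+1+j))"
proof -
  have 1: "pp (-1) (k+1) N * pp 1 (k+1) N = (\<Prod>j<N. 1 - fps_X^(2*(k+1+j)))"
  proof -
    have sq: "(fps_X::qz) ^ (2 * m) = fps_X ^ m * fps_X ^ m" for m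
      by (simp only: mult_2 power_add)
    show ?thesis
      unfolding pp_def prod.distrib[symmetric]
      by (rule prod.cong) (simp_all only: f sq add.assoc)
  qed
  have inv: "inverse (pp d k (Suc N)) = ginv d k * (\<Prod>j<N. ginv d (k+1+j))" for d
  proof -
    have "inverse (pp d k (Suc N)) = (\<Prod>j<Suc N. inverse (1 - fps_const d * fps_X ^ (k + j)))"
      unfolding pp_def by (rule inverse_prod)
    also have "\<dots> = ginv d k * (\<Prod>j<N. ginv d (k+1+j))"
      by (subst prod.lessThan_Suc_shift) (simp add: ginv_def)
    finally show ?thesis .
  qed
  have "fps_X^k * pp (-1) (k+1) N * pp 1 (k+1) N * inverse (pp c k (Suc N)) * inverse (pp c' k (Suc N))
      = fps_X^k * (pp (-1) (k+1) N * pp 1 (k+1) N) * inverse (pp c k (Suc N)) * inverse (pp c' k (Suc N))"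
    by (simp add: mult.assoc)
  also have "\<dots> = fps_X^k * (\<Prod>j<N. 1 - fps_X^(2*(k+1+j))) * (ginv c k * (\<Prod>j<N. ginv c (k+1+j)))
       * (ginv c' k * (\<Prod>j<N. ginv c' (k+1+j)))"
    by (simp only: 1 inv)
  also have "\<dots> = fps_X^k * ginv c k * ginv c' k *
     (\<Prod>j<N. (1 - fps_X^(2*(k+1+j))) * ginv c (k+1+j) * ginv c' (k+1+j))"
    by (simp add: prod.distrib ac_simps)
  finally show ?thesis .
qed

lemma nn_Sterm:
  assumes k: "k \<ge> 1"
  shows "nn (Sterm k)"
  unfolding nn_def
proof
  fix n
  define c where "c = zvar"
  define c' where "c' = inverse zvar"
  have cc: "c * c' = 1" by (simp add: c_def c'_def zvar_def)
  have nc: "nnl c" "nnl c'" by (auto simp: c_def c'_def zvar_def nnl_X nnl_Xinv)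
  let ?A = "fps_X^k * pp (-1) (k+1) (Suc n) * pp 1 (k+1) (Suc n) * inverse (pp c k (Suc (Suc n)))
      * inverse (pp c' k (Suc (Suc n)))"
  have "qc n (Sterm k) ?A"
    unfolding Sterm_def c_def c'_def
    using pp0[OF k] by (intro qc_mult qc_inv qpoch_qc qc_refl) auto
  moreover have "nn ?A"
    unfolding approx_eq
    using k nc cc by (intro nn_mult nn_Xp nn_ginv nn_prod nn_B) auto
  ultimately show "nnl (Sterm k $ n)" by (auto simp: nn_def intro: qc_nn)
qed

lemma Sterm_low: "i < k \<Longrightarrow> Sterm k $ i = 0"
proof -
  assume "i < k"
  have "Sterm k = fps_X^k * (qpoch_inf (-1) (k + 1) * qpoch_inf 1 (k + 1)
       * inverse (qpoch_inf zvar k) * inverse (qpoch_inf (inverse zvar) k))"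
    by (simp add: Sterm_def mult.assoc)
  thus ?thesis using \<open>i < k\<close> by (simp add: fps_X_power_mult_nth)
qed

lemma nn_lim_sum:
  fixes U :: "nat \<Rightarrow> qz"
  assumes nU: "\<And>j. nn (U j)" and low: "\<And>j i. i < j \<Longrightarrow> U j $ i = 0"
  shows "nn (lim (\<lambda>N. \<Sum>j<N. U j))"
proof -
  define f where "f N = (\<Sum>j<N. U j)" for N
  have st: "qc n (f N) (f (Suc n))" if "n < N" for n N
  proof -
    have "Suc n \<le> N" using that by simp
    thus ?thesis
    proof (induction N rule: dec_induct)
      case base thus ?case by simp
    next
      case (step N)
      have "qc n (U N) 0" using step low by (auto simp: qc_def)
      hence "qc n (f N + U N) (f (Suc n) + 0)" by (intro qc_add step)
      thus ?case by (simp add: f_def)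
    qed
  qed
  have "nnl (lim f $ n)" for n
  proof -
    have "qc n (lim f) (f (Suc n))" by (rule qc_lim[OF st]) auto
    moreover have "nn (f (Suc n))" unfolding f_def by (intro nn_sum nU)
    ultimately show ?thesis by (auto simp: nn_def intro: qc_nn)
  qed
  thus ?thesis by (simp add: nn_def f_def[abs_def])
qed

lemma nn_Sbar: "nn Sbar"
proof -
  have e: "Sbar = lim (\<lambda>N. \<Sum>j<N. Sterm (Suc j))"
    unfolding Sbar_def by (simp add: sum.atLeast1_atMost_eq)
  show ?thesis unfolding e by (rule nn_lim_sum) (auto simp: nn_Sterm Sterm_low)
qed

lemma nn_Sbar1: "nn Sbar1"
  unfolding Sbar1_def by (rule nn_lim_sum) (auto simp: nn_Sterm Sterm_low)

lemma nn_Sbar2: "nn Sbar2"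
proof -
  have e: "Sbar2 = lim (\<lambda>N. \<Sum>j<N. Sterm (2 * Suc j))"
    unfolding Sbar2_def by (simp only: One_nat_def sum.atLeast1_atMost_eq)
  show ?thesis unfolding e by (rule nn_lim_sum) (auto simp: nn_Sterm Sterm_low)
qed

theorem theorem2p16:
  fixes m :: int and n :: nat
  shows "N_Sbar m n \<ge> 0 \<and> N_Sbar1 m n \<ge> 0 \<and> N_Sbar2 m n \<ge> 0"
  using nn_Sbar nn_Sbar1 nn_Sbar2
  by (simp add: N_Sbar_def N_Sbar1_def N_Sbar2_def coeff_zq_def nn_def nnl_def)

end
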